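(* Let $f\colon\mathbb{F}_2^n\times\mathbb{F}_2^d\to\mathbb{F}_2^r$ be a strong, linear, lossless condenser for min-entropy $m$ with error $\epsilon$, and $g\colon\mathbb{F}_2^n\times\mathbb{F}_2^{d'}\to\mathbb{F}_2^k$ a strong, linear extractor for min-entropy $n-m$ with error $\epsilon'$. For each $u\in\mathbb{F}_2^d$ let $H_u$ be the $r\times n$ matrix with $f(x,u)=H_ux$ and let $\mathcal{C}_u:=\{x\in\mathbb{F}_2^n: H_ux=0\}$; for each $u\in\mathbb{F}_2^{d'}$ let $G_u$ be the $k\times n$ matrix of the linear map $g(\cdot,u)$ and let $\mathcal{C}'_u$ be the code with encoding map $x\mapsto xG_u$ ($x\in\mathbb{F}_2^k$). Let $S\subseteq[n]$ be a set of size at most $m$. Then all but a $5\epsilon$ fraction of the codes $\mathcal{C}_u$ ($u\in\mathbb{F}_2^d$) and all but a $5\epsilon'$ fraction of the codes $\mathcal{C}'_u$ ($u\in\mathbb{F}_2^{d'}$) can tolerate the erasure pattern defined by $S$.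
   Context: Statistical distance is half the $\ell_1$ distance; min-entropy at least $k$ means every outcome has probability at most $2^{-k}$. $f$ is a strong lossless condenser for min-entropy $m$ with error $\epsilon$ if for every distribution $\mathcal{X}$ on $\mathbb{F}_2^n$ with min-entropy at least $m$, $X\sim\mathcal{X}$ and independent uniform $U$ on $\mathbb{F}_2^d$, $(U,f(X,U))$ is within statistical distance $\epsilon$ of a distribution of the form $(\mathcal{U}_d,\mathcal{Z})$ with min-entropy at least $d+m$; it is linear if $f(\cdot,u)$ is linear for every $u$. $g$ is a strong extractor for min-entropy $n-m$ with error $\epsilon'$ if for every such $\mathcal{X}$ with min-entropy at least $n-m$ and independent uniform $U$, $(U,g(X,U))$ is within statistical distance $\epsilon'$ of uniform on $\mathbb{F}_2^{d'+k}$; linear means $g(\cdot,u)$ is linear for each $u$. A linear code given as a kernel $\mathcal{C}_u$ tolerates the erasure pattern $S$ if no two distinct codewords agree on all coordinates outside $S$; the code $\mathcal{C}'_u$ tolerates $S$ if the map sending $x\in\mathbb{F}_2^k$ to the restriction of $xG_u$ to the coordinates in $[n]\setminus S$ is injective. *)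

theory Defs
  imports "HOL-Probability.Probability"
begin

text \<open>Vectors in F_2^n are boolean lists of length n; addition is pointwise xor.
  Coordinates are indexed 0..n-1 (so [n] is {0..<n}).\<close>

definition vecs :: "nat \<Rightarrow> bool list set" where
  "vecs n = {x. length x = n}"

definition vadd :: "bool list \<Rightarrow> bool list \<Rightarrow> bool list" where
  "vadd x y = map2 (\<noteq>) x y"

definition zero_vec :: "nat \<Rightarrow> bool list" where
  "zero_vec n = replicate n False"

definition unit_vec :: "nat \<Rightarrow> nat \<Rightarrow> bool list" where
  "unit_vec n j = map (\<lambda>i. i = j) [0..<n]"

definition stat_dist :: "'a pmf \<Rightarrow> 'a pmf \<Rightarrow> real" where
  "stat_dist P Q = (\<Sum>\<^sub>\<infinity>x. \<bar>pmf P x - pmf Q x\<bar>) / 2"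

definition min_entropy_ge :: "'a pmf \<Rightarrow> real \<Rightarrow> bool" where
  "min_entropy_ge P k \<longleftrightarrow> (\<forall>x. pmf P x \<le> 2 powr (- k))"

definition unif :: "nat \<Rightarrow> bool list pmf" where
  "unif d = pmf_of_set (vecs d)"

definition seeded_out ::
  "(bool list \<Rightarrow> bool list \<Rightarrow> bool list) \<Rightarrow> nat \<Rightarrow> bool list pmf \<Rightarrow> (bool list \<times> bool list) pmf" where
  "seeded_out f d X = map_pmf (\<lambda>(x, u). (u, f x u)) (pair_pmf X (unif d))"

definition is_source :: "nat \<Rightarrow> real \<Rightarrow> bool list pmf \<Rightarrow> bool" where
  "is_source n k X \<longleftrightarrow> set_pmf X \<subseteq> vecs n \<and> min_entropy_ge X k"

definition linear_seeded :: "nat \<Rightarrow> nat \<Rightarrow> nat \<Rightarrow> (bool list \<Rightarrow> bool list \<Rightarrow> bool list) \<Rightarrow> bool" where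
  "linear_seeded n d r f \<longleftrightarrow>
     (\<forall>u\<in>vecs d. (\<forall>x\<in>vecs n. f x u \<in> vecs r) \<and>
        (\<forall>x\<in>vecs n. \<forall>y\<in>vecs n. f (vadd x y) u = vadd (f x u) (f y u)))"

definition strong_lossless_condenser ::
  "nat \<Rightarrow> nat \<Rightarrow> nat \<Rightarrow> (bool list \<Rightarrow> bool list \<Rightarrow> bool list) \<Rightarrow> real \<Rightarrow> real \<Rightarrow> bool" where
  "strong_lossless_condenser n d r f m eps \<longleftrightarrow>
     (\<forall>X. is_source n m X \<longrightarrow>
        (\<exists>Z :: (bool list \<times> bool list) pmf.
            set_pmf Z \<subseteq> vecs d \<times> vecs r \<and>
            map_pmf fst Z = unif d \<and>
            min_entropy_ge Z (real d + m) \<and>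
            stat_dist (seeded_out f d X) Z \<le> eps))"

definition strong_extractor ::
  "nat \<Rightarrow> nat \<Rightarrow> nat \<Rightarrow> (bool list \<Rightarrow> bool list \<Rightarrow> bool list) \<Rightarrow> real \<Rightarrow> real \<Rightarrow> bool" where
  "strong_extractor n d k g mm eps \<longleftrightarrow>
     (\<forall>X. is_source n mm X \<longrightarrow>
        stat_dist (seeded_out g d X) (pmf_of_set (vecs d \<times> vecs k)) \<le> eps)"

definition kernel_code :: "nat \<Rightarrow> nat \<Rightarrow> (bool list \<Rightarrow> bool list \<Rightarrow> bool list) \<Rightarrow> bool list \<Rightarrow> bool list set" where
  "kernel_code n r f u = {x \<in> vecs n. f x u = zero_vec r}"

definition agree_outside :: "nat \<Rightarrow> nat set \<Rightarrow> bool list \<Rightarrow> bool list \<Rightarrow> bool" where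
  "agree_outside n S x y \<longleftrightarrow> (\<forall>i<n. i \<notin> S \<longrightarrow> x ! i = y ! i)"

definition kernel_tolerates :: "nat \<Rightarrow> bool list set \<Rightarrow> nat set \<Rightarrow> bool" where
  "kernel_tolerates n C S \<longleftrightarrow>
     (\<forall>x\<in>C. \<forall>y\<in>C. x \<noteq> y \<longrightarrow> \<not> agree_outside n S x y)"

text \<open>G_u: the k x n matrix of the linear map g(.,u); entry (i,j) is the i-th
  coordinate of g(e_j,u).  Encoding x \<mapsto> x G_u for x in F_2^k.\<close>
definition gen_matrix :: "nat \<Rightarrow> (bool list \<Rightarrow> bool list \<Rightarrow> bool list) \<Rightarrow> bool list \<Rightarrow> nat \<Rightarrow> nat \<Rightarrow> bool" where
  "gen_matrix n g u i j = g (unit_vec n j) u ! i"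

definition encode :: "nat \<Rightarrow> nat \<Rightarrow> (bool list \<Rightarrow> bool list \<Rightarrow> bool list) \<Rightarrow> bool list \<Rightarrow> bool list \<Rightarrow> bool list" where
  "encode n k g u x =
     map (\<lambda>j. odd (card {i. i < k \<and> x ! i \<and> gen_matrix n g u i j})) [0..<n]"

definition restrict_outside :: "nat \<Rightarrow> nat set \<Rightarrow> bool list \<Rightarrow> bool list" where
  "restrict_outside n S y = map (\<lambda>j. y ! j) (filter (\<lambda>j. j \<notin> S) [0..<n])"

definition gen_tolerates :: "nat \<Rightarrow> nat \<Rightarrow> (bool list \<Rightarrow> bool list \<Rightarrow> bool list) \<Rightarrow> bool list \<Rightarrow> nat set \<Rightarrow> bool" where
  "gen_tolerates n k g u S \<longleftrightarrow> inj_on (\<lambda>x. restrict_outside n S (encode n k g u x)) (vecs k)"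

end

theory Submission
  imports Defs
begin

lemma vecs_eq: "vecs n = {xs. set xs \<subseteq> (UNIV::bool set) \<and> length xs = n}"
  by (auto simp: vecs_def)

lemma finite_vecs[simp]: "finite (vecs n)"
  unfolding vecs_eq by (rule finite_lists_length_eq) simp

lemma card_vecs: "card (vecs n) = 2 ^ n"
  unfolding vecs_eq by (subst card_lists_length_eq) (simp_all add: card_UNIV_bool)

lemma zero_in_vecs[simp]: "zero_vec n \<in> vecs n"
  by (simp add: zero_vec_def vecs_def)

lemma vecs_ne[simp]: "vecs n \<noteq> {}"
  using zero_in_vecs by blast

lemma length_vadd[simp]: "length (vadd x y) = min (length x) (length y)"
  by (simp add: vadd_def)

lemma nth_vadd[simp]: "i < length x \<Longrightarrow> i < length y \<Longrightarrow> vadd x y ! i = (x ! i \<noteq> y ! i)"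
  by (simp add: vadd_def)

lemma vadd_vecs[simp]: "x \<in> vecs n \<Longrightarrow> y \<in> vecs n \<Longrightarrow> vadd x y \<in> vecs n"
  by (simp add: vecs_def)

lemma vadd_zero: "x \<in> vecs n \<Longrightarrow> vadd x (zero_vec n) = x"
  by (intro nth_equalityI) (auto simp: vecs_def zero_vec_def)

lemma vadd_self: "x \<in> vecs n \<Longrightarrow> vadd x x = zero_vec n"
  by (intro nth_equalityI) (auto simp: vecs_def zero_vec_def)

lemma vadd_cancel: "x \<in> vecs n \<Longrightarrow> e \<in> vecs n \<Longrightarrow> vadd (vadd x e) e = x"
  by (intro nth_equalityI) (auto simp: vecs_def)

lemma vadd_inj: "x \<in> vecs n \<Longrightarrow> y \<in> vecs n \<Longrightarrow> e \<in> vecs n \<Longrightarrow> vadd x e = vadd y e \<Longrightarrow> x = y"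
  by (metis vadd_cancel)

definition setvec :: "nat \<Rightarrow> nat set \<Rightarrow> bool list" where
  "setvec n A = map (\<lambda>i. i \<in> A) [0..<n]"

definition Vsup :: "nat \<Rightarrow> nat set \<Rightarrow> bool list set" where
  "Vsup n A = {x \<in> vecs n. \<forall>i<n. x ! i \<longrightarrow> i \<in> A}"

lemma card_Vsup:
  assumes "A \<subseteq> {..<n}"
  shows "card (Vsup n A) = 2 ^ card A"
proof -
  have fA: "finite A" using assms finite_subset by blast
  have inj: "inj_on (setvec n) (Pow A)"
  proof
    fix B C assume B: "B \<in> Pow A" and C: "C \<in> Pow A" and eq: "setvec n B = setvec n C"
    show "B = C"
    proof (intro set_eqI)
      fix i show "i \<in> B \<longleftrightarrow> i \<in> C"
      proof (cases "i < n")
        case True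
        have "setvec n B ! i = setvec n C ! i" using eq by simp
        thus ?thesis using True by (simp add: setvec_def)
      next
        case False thus ?thesis using B C assms by auto
      qed
    qed
  qed
  have img: "Vsup n A = setvec n ` Pow A"
  proof
    show "Vsup n A \<subseteq> setvec n ` Pow A"
    proof
      fix x assume x: "x \<in> Vsup n A"
      have "x = setvec n {i. i < n \<and> x ! i}"
        using x by (intro nth_equalityI) (auto simp: setvec_def Vsup_def vecs_def)
      moreover have "{i. i < n \<and> x ! i} \<in> Pow A" using x by (auto simp: Vsup_def)
      ultimately show "x \<in> setvec n ` Pow A" by blast
    qed
    show "setvec n ` Pow A \<subseteq> Vsup n A"
      by (auto simp: setvec_def Vsup_def vecs_def)
  qed
  show ?thesis using card_image[OF inj] img card_Pow[of A] fA by simp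
qed

lemma half_lemma:
  assumes "finite V" "h ` {x\<in>V. P x} \<subseteq> {x\<in>V. \<not> P x}" "inj_on h {x\<in>V. P x}"
  shows "2 * card {x\<in>V. P x} \<le> card V"
proof -
  have "card {x\<in>V. P x} \<le> card {x\<in>V. \<not> P x}"
    using card_inj_on_le[OF assms(3) assms(2)] assms(1) by simp
  moreover have "card {x\<in>V. P x} + card {x\<in>V. \<not> P x} = card V"
  proof -
    have "V = {x\<in>V. P x} \<union> {x\<in>V. \<not> P x}" by auto
    hence "card V = card ({x\<in>V. P x} \<union> {x\<in>V. \<not> P x})" by simp
    also have "\<dots> = card {x\<in>V. P x} + card {x\<in>V. \<not> P x}"
      using assms(1) by (intro card_Un_disjoint) auto
    finally show ?thesis by simp
  qed
  ultimately show ?thesis by simp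
qed


lemma pmf_sum_one:
  assumes "finite D" "set_pmf P \<subseteq> D"
  shows "sum (pmf P) D = 1"
proof -
  have "measure P D = 1"
    using assms by (simp add: measure_pmf.prob_eq_1 AE_measure_pmf_iff subset_iff)
  thus ?thesis using measure_measure_pmf_finite[OF assms(1)] by simp
qed

lemma stat_dist_lower:
  assumes D: "finite D" "set_pmf P \<subseteq> D" "set_pmf Q \<subseteq> D" and E: "E \<subseteq> D"
  shows "measure P E - measure Q E \<le> stat_dist P Q"
proof -
  have fE: "finite E" using E D finite_subset by blast
  have "(\<Sum>\<^sub>\<infinity>x. \<bar>pmf P x - pmf Q x\<bar>) = (\<Sum>x\<in>D. \<bar>pmf P x - pmf Q x\<bar>)"
  proof -
    have "(\<Sum>\<^sub>\<infinity>x. \<bar>pmf P x - pmf Q x\<bar>) = (\<Sum>\<^sub>\<infinity>x\<in>D. \<bar>pmf P x - pmf Q x\<bar>)"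
    proof (intro infsum_cong_neutral)
      fix x assume "x \<in> UNIV - D"
      hence "x \<notin> set_pmf P" "x \<notin> set_pmf Q" using D by auto
      thus "\<bar>pmf P x - pmf Q x\<bar> = 0" by (simp add: set_pmf_iff)
    qed auto
    thus ?thesis using D(1) by (simp add: infsum_finite)
  qed
  moreover have "(\<Sum>x\<in>D. \<bar>pmf P x - pmf Q x\<bar>) =
      (\<Sum>x\<in>E. \<bar>pmf P x - pmf Q x\<bar>) + (\<Sum>x\<in>D-E. \<bar>pmf P x - pmf Q x\<bar>)"
    using D(1) E by (metis sum.subset_diff add.commute)
  moreover have "(\<Sum>x\<in>E. pmf P x - pmf Q x) \<le> (\<Sum>x\<in>E. \<bar>pmf P x - pmf Q x\<bar>)"
    by (intro sum_mono) simp
  moreover have "(\<Sum>x\<in>D-E. pmf Q x - pmf P x) \<le> (\<Sum>x\<in>D-E. \<bar>pmf P x - pmf Q x\<bar>)"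
    by (intro sum_mono) simp
  moreover have "sum (pmf P) D = sum (pmf P) E + sum (pmf P) (D - E)"
    using D(1) E by (metis sum.subset_diff add.commute)
  moreover have "sum (pmf Q) D = sum (pmf Q) E + sum (pmf Q) (D - E)"
    using D(1) E by (metis sum.subset_diff add.commute)
  moreover have "sum (pmf P) D = 1" "sum (pmf Q) D = 1" using D pmf_sum_one by auto
  moreover have "measure P E = sum (pmf P) E" "measure Q E = sum (pmf Q) E"
    using fE measure_measure_pmf_finite by auto
  ultimately show ?thesis unfolding stat_dist_def by (simp add: sum_subtractf)
qed

lemma measure_le_card:
  assumes "finite E" "\<And>x. pmf Q x \<le> c"
  shows "measure Q E \<le> real (card E) * c"
proof -
  have "measure Q E = sum (pmf Q) E" using assms measure_measure_pmf_finite by auto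
  also have "\<dots> \<le> sum (\<lambda>_. c) E" by (intro sum_mono assms(2))
  finally show ?thesis by simp
qed

lemma set_unif: "set_pmf (unif d) = vecs d"
  by (simp add: unif_def)

lemma measure_unif: "B \<subseteq> vecs d \<Longrightarrow> measure (unif d) B = real (card B) / 2 ^ d"
  by (simp add: unif_def measure_pmf_of_set card_vecs Int_absorb1)

lemma set_seeded_out:
  assumes "linear_seeded n d r f" "set_pmf X \<subseteq> vecs n"
  shows "set_pmf (seeded_out f d X) \<subseteq> vecs d \<times> vecs r"
  using assms by (auto simp: seeded_out_def set_unif linear_seeded_def)

lemma seeded_out_lower:
  fixes X :: "bool list pmf"
  assumes "finite V" "finite B" "B \<subseteq> vecs d" "\<And>u x. u \<in> B \<Longrightarrow> x \<in> V \<Longrightarrow> f x u \<in> Imf u"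
  shows "measure X V * (real (card B) / 2 ^ d) \<le> measure (seeded_out f d X) (Sigma B Imf)"
proof -
  have "measure (seeded_out f d X) (Sigma B Imf) =
     measure (pair_pmf X (unif d)) ((\<lambda>(x, u). (u, f x u)) -` Sigma B Imf)"
    by (simp add: seeded_out_def measure_map_pmf)
  also have "\<dots> \<ge> measure (pair_pmf X (unif d)) (V \<times> B)"
    using assms(4) by (intro measure_pmf.finite_measure_mono) auto
  also have "measure (pair_pmf X (unif d)) (V \<times> B) = measure X V * measure (unif d) B"
    using assms by (intro measure_pmf_prob_product) (auto intro: countable_finite)
  finally show ?thesis using measure_unif[OF assms(3)] by simp
qed


lemma card_symdiff:
  assumes "finite A" "finite B"
  shows "card ((A - B) \<union> (B - A)) + 2 * card (A \<inter> B) = card A + card B"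
proof -
  have a: "card A = card (A - B) + card (A \<inter> B)"
    using assms by (subst card_Un_disjoint[symmetric]) (auto intro: arg_cong[where f=card])
  have b: "card B = card (B - A) + card (A \<inter> B)"
    using assms by (subst card_Un_disjoint[symmetric]) (auto intro: arg_cong[where f=card])
  have c: "card ((A - B) \<union> (B - A)) = card (A - B) + card (B - A)"
    using assms by (intro card_Un_disjoint) auto
  show ?thesis using a b c by simp
qed

lemma odd_symdiff:
  assumes "finite A" "finite B"
  shows "odd (card ((A - B) \<union> (B - A))) = (odd (card A) \<noteq> odd (card B))"
  using card_symdiff[OF assms] by presburger

definition ip :: "nat \<Rightarrow> bool list \<Rightarrow> bool list \<Rightarrow> bool" where
  "ip k z y = odd (card {i. i < k \<and> z ! i \<and> y ! i})"

lemma ip_vadd_left: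
  assumes "length x = k" "length x' = k"
  shows "ip k (vadd x x') y = (ip k x y \<noteq> ip k x' y)"
proof -
  let ?A = "{i. i < k \<and> x ! i \<and> y ! i}" and ?B = "{i. i < k \<and> x' ! i \<and> y ! i}"
  have "{i. i < k \<and> vadd x x' ! i \<and> y ! i} = (?A - ?B) \<union> (?B - ?A)"
    using assms by auto
  thus ?thesis unfolding ip_def using odd_symdiff[of ?A ?B] by simp
qed

lemma ip_vadd_right:
  assumes "length y = k" "length y' = k"
  shows "ip k z (vadd y y') = (ip k z y \<noteq> ip k z y')"
proof -
  let ?A = "{i. i < k \<and> z ! i \<and> y ! i}" and ?B = "{i. i < k \<and> z ! i \<and> y' ! i}"
  have "{i. i < k \<and> z ! i \<and> vadd y y' ! i} = (?A - ?B) \<union> (?B - ?A)"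
    using assms by auto
  thus ?thesis unfolding ip_def using odd_symdiff[of ?A ?B] by simp
qed

lemma ip_zero: "ip k z (zero_vec k) = False"
proof -
  have e: "{i. i < k \<and> z ! i \<and> zero_vec k ! i} = {}" by (auto simp: zero_vec_def)
  show ?thesis unfolding ip_def e by simp
qed

lemma ip_unit: "i0 < k \<Longrightarrow> z ! i0 \<Longrightarrow> ip k z (unit_vec k i0)"
proof -
  assume a: "i0 < k" "z ! i0"
  have "{i. i < k \<and> z ! i \<and> unit_vec k i0 ! i} = {i0}"
    using a by (auto simp: unit_vec_def)
  thus ?thesis by (simp add: ip_def)
qed

lemma unit_vecs: "unit_vec n j \<in> vecs n"
  by (simp add: unit_vec_def vecs_def)

lemma lin_zero:
  assumes "linear_seeded n d k g" "u \<in> vecs d"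
  shows "g (zero_vec n) u = zero_vec k"
proof -
  have z: "vadd (zero_vec n) (zero_vec n) = zero_vec n" by (simp add: vadd_self)
  have m: "g (zero_vec n) u \<in> vecs k" using assms by (simp add: linear_seeded_def)
  have "g (zero_vec n) u = vadd (g (zero_vec n) u) (g (zero_vec n) u)"
    using assms z by (metis linear_seeded_def zero_in_vecs)
  thus ?thesis using vadd_self[OF m] by simp
qed

lemma setvec_vecs: "setvec n A \<in> vecs n" by (simp add: setvec_def vecs_def)

lemma setvec_empty: "setvec n {} = zero_vec n"
  by (intro nth_equalityI) (auto simp: setvec_def zero_vec_def)

lemma setvec_insert: "j \<notin> A \<Longrightarrow> setvec n (insert j A) = vadd (setvec n A) (unit_vec n j)"
  by (intro nth_equalityI) (auto simp: setvec_def unit_vec_def)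

lemma ip_lin_vanish:
  assumes lin: "linear_seeded n d k g" and u: "u \<in> vecs d"
    and van: "\<And>j. j < n \<Longrightarrow> j \<notin> S \<Longrightarrow> \<not> ip k z (g (unit_vec n j) u)"
    and fA: "finite A" and A: "A \<subseteq> {..<n} - S"
  shows "\<not> ip k z (g (setvec n A) u)"
  using fA A
proof (induction A rule: finite_induct)
  case empty
  show ?case using lin_zero[OF lin u] by (simp add: setvec_empty ip_zero)
next
  case (insert j A)
  have "g (setvec n (insert j A)) u = vadd (g (setvec n A) u) (g (unit_vec n j) u)"
    using insert lin u setvec_insert[of j A n] setvec_vecs unit_vecs
    by (simp add: linear_seeded_def)
  moreover have "g (setvec n A) u \<in> vecs k" "g (unit_vec n j) u \<in> vecs k"
    using lin u setvec_vecs unit_vecs by (auto simp: linear_seeded_def)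
  ultimately show ?case using insert van ip_vadd_right[of "g (setvec n A) u" k "g (unit_vec n j) u" z]
    by (simp add: vecs_def)
qed


lemma encode_nth:
  "j < n \<Longrightarrow> encode n k g u x ! j = ip k x (g (unit_vec n j) u)"
  by (simp add: encode_def gen_matrix_def ip_def)

lemma setvec_of: "v \<in> vecs n \<Longrightarrow> v = setvec n {i. i < n \<and> v ! i}"
  by (intro nth_equalityI) (auto simp: setvec_def vecs_def)

lemma part2_key:
  assumes lin: "linear_seeded n d k g" and u: "u \<in> vecs d"
    and bad: "\<not> gen_tolerates n k g u S"
  shows "2 * card ((\<lambda>x. g x u) ` Vsup n ({..<n} - S)) \<le> 2 ^ k"
proof -
  obtain x x' where x: "x \<in> vecs k" and x': "x' \<in> vecs k" and ne: "x \<noteq> x'"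
    and eq: "restrict_outside n S (encode n k g u x) = restrict_outside n S (encode n k g u x')"
    using bad unfolding gen_tolerates_def inj_on_def by blast
  define z where "z = vadd x x'"
  obtain i0 where i0: "i0 < k" "x ! i0 \<noteq> x' ! i0"
    using ne x x' nth_equalityI[of x x'] by (auto simp: vecs_def)
  have zi0: "z ! i0" using i0 x x' by (simp add: z_def vecs_def)
  have van: "\<not> ip k z (g (unit_vec n j) u)" if j: "j < n" "j \<notin> S" for j
  proof -
    have "j \<in> set (filter (\<lambda>j. j \<notin> S) [0..<n])" using j by simp
    hence "encode n k g u x ! j = encode n k g u x' ! j"
      using eq unfolding restrict_outside_def map_eq_conv by blast
    hence "ip k x (g (unit_vec n j) u) = ip k x' (g (unit_vec n j) u)"
      using j by (simp add: encode_nth)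
    thus ?thesis using ip_vadd_left[of x k x'] x x' by (simp add: z_def vecs_def)
  qed
  have sub: "(\<lambda>x. g x u) ` Vsup n ({..<n} - S) \<subseteq> {y\<in>vecs k. \<not> ip k z y}"
  proof
    fix y assume "y \<in> (\<lambda>x. g x u) ` Vsup n ({..<n} - S)"
    then obtain v where v: "v \<in> Vsup n ({..<n} - S)" and y: "y = g v u" by blast
    have vv: "v \<in> vecs n" using v by (simp add: Vsup_def)
    have "\<not> ip k z (g (setvec n {i. i < n \<and> v ! i}) u)"
      using v by (intro ip_lin_vanish[OF lin u van]) (auto simp: Vsup_def)
    hence "\<not> ip k z y" using y setvec_of[OF vv] by simp
    moreover have "y \<in> vecs k" using lin u vv y by (simp add: linear_seeded_def)
    ultimately show "y \<in> {y\<in>vecs k. \<not> ip k z y}" by simp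
  qed
  define e where "e = unit_vec k i0"
  have ev: "e \<in> vecs k" by (simp add: e_def unit_vecs)
  have half: "2 * card {y\<in>vecs k. \<not> ip k z y} \<le> card (vecs k)"
  proof (rule half_lemma)
    show "finite (vecs k)" by simp
    show "(\<lambda>y. vadd y e) ` {y \<in> vecs k. \<not> ip k z y} \<subseteq> {y \<in> vecs k. \<not> \<not> ip k z y}"
    proof
      fix w assume "w \<in> (\<lambda>y. vadd y e) ` {y \<in> vecs k. \<not> ip k z y}"
      then obtain y where y: "y \<in> vecs k" "\<not> ip k z y" and w: "w = vadd y e" by blast
      have "ip k z w = (ip k z y \<noteq> ip k z e)"
        using w y ev ip_vadd_right by (simp add: vecs_def)
      moreover have "ip k z e" using ip_unit[OF i0(1) zi0] by (simp add: e_def)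
      ultimately show "w \<in> {y \<in> vecs k. \<not> \<not> ip k z y}" using y w ev by simp
    qed
    show "inj_on (\<lambda>y. vadd y e) {y \<in> vecs k. \<not> ip k z y}"
      using ev by (auto intro: inj_onI vadd_inj)
  qed
  have "card ((\<lambda>x. g x u) ` Vsup n ({..<n} - S)) \<le> card {y\<in>vecs k. \<not> ip k z y}"
    using sub by (intro card_mono) auto
  thus ?thesis using half card_vecs[of k] by simp
qed


lemma powr_nat_bound:
  fixes a :: nat and b :: real
  assumes "- real a \<le> b"
  shows "1 / (2::real) ^ a \<le> 2 powr b"
proof -
  have "1 / (2::real) ^ a = 2 powr (- real a)"
    by (simp add: powr_minus powr_realpow divide_inverse)
  also have "\<dots> \<le> 2 powr b" using assms by (intro powr_mono) auto
  finally show ?thesis .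
qed

lemma part2:
  assumes lin: "linear_seeded n d' k g" and ext: "strong_extractor n d' k g (real n - m) eps'"
    and S: "S \<subseteq> {0..<n}" and cS: "real (card S) \<le> m"
  shows "real (card {u \<in> vecs d'. \<not> gen_tolerates n k g u S}) \<le> 2 * eps' * 2 ^ d'"
proof -
  define W where "W = Vsup n ({..<n} - S)"
  define Bad where "Bad = {u \<in> vecs d'. \<not> gen_tolerates n k g u S}"
  define Imf where "Imf = (\<lambda>u. (\<lambda>x. g x u) ` W)"
  have S': "S \<subseteq> {..<n}" using S by auto
  have fS: "finite S" using finite_subset[OF S] by simp
  have cSn: "card S \<le> n" using card_mono[OF _ S'] by simp
  have cW: "card W = 2 ^ (n - card S)"
    unfolding W_def using card_Vsup[of "{..<n} - S" n] S' fS by (simp add: card_Diff_subset)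
  have Wv: "W \<subseteq> vecs n" by (auto simp: W_def Vsup_def)
  have fW: "finite W" using finite_subset[OF Wv] by simp
  have "zero_vec n \<in> W" by (simp add: W_def Vsup_def zero_vec_def vecs_def)
  hence W0: "W \<noteq> {}" by blast
  define X where "X = pmf_of_set W"
  have src: "is_source n (real n - m) X"
    unfolding is_source_def min_entropy_ge_def
  proof (intro conjI allI)
    show "set_pmf X \<subseteq> vecs n" using Wv fW W0 by (simp add: X_def)
    fix x
    have "pmf X x \<le> 1 / real (card W)" using fW W0 by (simp add: X_def indicator_def)
    also have "\<dots> = 1 / 2 ^ (n - card S)" by (simp add: cW)
    also have "\<dots> \<le> 2 powr (- (real n - m))"
      using cS cSn by (intro powr_nat_bound) (simp add: of_nat_diff)
    finally show "pmf X x \<le> 2 powr (- (real n - m))" .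
  qed
  have sd: "stat_dist (seeded_out g d' X) (pmf_of_set (vecs d' \<times> vecs k)) \<le> eps'"
    using ext src by (simp add: strong_extractor_def)
  have fBad: "finite Bad" "Bad \<subseteq> vecs d'" by (auto simp: Bad_def)
  have ImV: "Imf u \<subseteq> vecs k" if "u \<in> vecs d'" for u
    using lin that Wv by (auto simp: Imf_def linear_seeded_def)
  have Imc: "2 * card (Imf u) \<le> 2 ^ k" if "u \<in> Bad" for u
    using part2_key[OF lin, of u S] that by (simp add: Bad_def Imf_def W_def)
  define E where "E = Sigma Bad Imf"
  have ED: "E \<subseteq> vecs d' \<times> vecs k" using ImV fBad by (auto simp: E_def)
  have fE: "finite E" by (rule finite_subset[OF ED]) simp
  have cE: "2 * card E \<le> card Bad * 2 ^ k"
  proof -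
    have "card E = (\<Sum>u\<in>Bad. card (Imf u))" unfolding E_def
      using fBad(1) fW by (intro card_SigmaI) (auto simp: Imf_def)
    hence "2 * card E = (\<Sum>u\<in>Bad. 2 * card (Imf u))" by (simp add: sum_distrib_left)
    also have "\<dots> \<le> (\<Sum>u\<in>Bad. 2 ^ k)" by (intro sum_mono Imc)
    finally show ?thesis by simp
  qed
  have P: "real (card Bad) / 2 ^ d' \<le> measure (seeded_out g d' X) E"
  proof -
    have "measure X W * (real (card Bad) / 2 ^ d') \<le> measure (seeded_out g d' X) E"
      unfolding E_def using fW fBad by (intro seeded_out_lower) (auto simp: Imf_def)
    moreover have "measure X W = 1" using fW W0 by (simp add: X_def measure_pmf_of_set)
    ultimately show ?thesis by simp
  qed
  have Q: "measure (pmf_of_set (vecs d' \<times> vecs k)) E \<le> real (card E) * (1 / (2 ^ d' * 2 ^ k))"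
  proof (rule measure_le_card[OF fE])
    fix x
    have "pmf (pmf_of_set (vecs d' \<times> vecs k)) x \<le> 1 / real (card (vecs d' \<times> vecs k))"
      by (simp add: indicator_def)
    thus "pmf (pmf_of_set (vecs d' \<times> vecs k)) x \<le> 1 / (2 ^ d' * 2 ^ k)"
      by (simp add: card_cartesian_product card_vecs)
  qed
  have s1: "set_pmf (seeded_out g d' X) \<subseteq> vecs d' \<times> vecs k"
    using set_seeded_out[OF lin, of X] src by (simp add: is_source_def)
  have s2: "set_pmf (pmf_of_set (vecs d' \<times> vecs k)) \<subseteq> vecs d' \<times> vecs k"
    by simp
  have "measure (seeded_out g d' X) E - measure (pmf_of_set (vecs d' \<times> vecs k)) E \<le> eps'"
    using stat_dist_lower[OF _ s1 s2 ED] sd by simp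
  moreover have "real (card E) * (1 / (2 ^ d' * 2 ^ k)) = real (card E) / (2 ^ d' * 2 ^ k)"
    by simp
  ultimately have main: "real (card Bad) / 2 ^ d' - real (card E) / (2 ^ d' * 2 ^ k) \<le> eps'"
    using P Q by linarith
  have "real (card E) / (2 ^ d' * 2 ^ k) \<le> real (card Bad) / (2 * 2 ^ d')"
  proof -
    have "real (2 * card E) \<le> real (card Bad * 2 ^ k)" using cE by (simp only: of_nat_le_iff)
    hence h: "2 * real (card E) \<le> real (card Bad) * 2 ^ k" by simp
    have "real (card E) / (2 ^ d' * 2 ^ k) = (2 * real (card E)) / (2 * 2 ^ d' * 2 ^ k)"
      by simp
    also have "\<dots> \<le> (real (card Bad) * 2 ^ k) / (2 * 2 ^ d' * 2 ^ k)"
      by (intro divide_right_mono h) simp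
    also have "\<dots> = real (card Bad) / (2 * 2 ^ d')" by simp
    finally show ?thesis .
  qed
  moreover have "real (card Bad) / 2 ^ d' - real (card Bad) / (2 * 2 ^ d') = real (card Bad) / (2 * 2 ^ d')"
    by (simp add: field_simps)
  ultimately have "real (card Bad) / (2 * 2 ^ d') \<le> eps'" using main by linarith
  hence "real (card Bad) \<le> eps' * (2 * 2 ^ d')" by (simp add: pos_divide_le_eq)
  thus ?thesis unfolding Bad_def[symmetric] by (simp add: algebra_simps)
qed


lemma part1_key:
  assumes lin: "linear_seeded n d r f" and u: "u \<in> vecs d"
    and ST: "S \<subseteq> T" and T: "T \<subseteq> {..<n}"
    and bad: "\<not> kernel_tolerates n (kernel_code n r f u) S"
  shows "2 * card ((\<lambda>x. f x u) ` Vsup n T) \<le> 2 ^ card T"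
proof -
  obtain x y where x: "x \<in> vecs n" and y: "y \<in> vecs n" and ne: "x \<noteq> y"
    and fx: "f x u = zero_vec r" and fy: "f y u = zero_vec r" and ag: "agree_outside n S x y"
    using bad unfolding kernel_tolerates_def kernel_code_def by blast
  obtain i0 where i0: "i0 < n" "x ! i0 \<noteq> y ! i0"
    using ne x y nth_equalityI[of x y] by (auto simp: vecs_def)
  have i0S: "i0 \<in> S" using ag i0 unfolding agree_outside_def by blast
  define e where "e = vadd x y"
  have ev: "e \<in> vecs n" using x y by (simp add: e_def)
  have ei0: "e ! i0" using i0 x y by (simp add: e_def vecs_def)
  have eV: "e \<in> Vsup n T"
    using ev x y ag ST unfolding Vsup_def agree_outside_def e_def by (auto simp: vecs_def)
  have fe: "f e u = zero_vec r"
  proof -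
    have "f e u = vadd (f x u) (f y u)" using lin u x y by (simp add: e_def linear_seeded_def)
    thus ?thesis using fx fy vadd_self[OF zero_in_vecs[of r]] by simp
  qed
  have Vv: "Vsup n T \<subseteq> vecs n" by (auto simp: Vsup_def)
  have fV: "finite (Vsup n T)" using finite_subset[OF Vv] by simp
  have clos: "vadd v e \<in> Vsup n T" if "v \<in> Vsup n T" for v
    using that eV unfolding Vsup_def by (auto simp: vecs_def)
  let ?V0 = "{v \<in> Vsup n T. \<not> \<not> v ! i0}"
  have sub: "(\<lambda>x. f x u) ` Vsup n T \<subseteq> (\<lambda>x. f x u) ` {v \<in> Vsup n T. \<not> v ! i0}"
  proof
    fix w assume "w \<in> (\<lambda>x. f x u) ` Vsup n T"
    then obtain v where v: "v \<in> Vsup n T" and w: "w = f v u" by blast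
    have vv: "v \<in> vecs n" using v Vv by blast
    show "w \<in> (\<lambda>x. f x u) ` {v \<in> Vsup n T. \<not> v ! i0}"
    proof (cases "v ! i0")
      case False thus ?thesis using v w by blast
    next
      case True
      have "f (vadd v e) u = vadd (f v u) (f e u)" using lin u vv ev by (simp add: linear_seeded_def)
      also have "\<dots> = f v u" using fe vadd_zero lin u vv by (simp add: linear_seeded_def)
      finally have "w = f (vadd v e) u" using w by simp
      moreover have "\<not> vadd v e ! i0" using True ei0 vv ev i0 by (simp add: vecs_def)
      ultimately show ?thesis using clos[OF v] by blast
    qed
  qed
  have half: "2 * card {v \<in> Vsup n T. \<not> v ! i0} \<le> card (Vsup n T)"
  proof (rule half_lemma[OF fV])
    show "(\<lambda>v. vadd v e) ` {v \<in> Vsup n T. \<not> v ! i0} \<subseteq> {v \<in> Vsup n T. \<not> \<not> v ! i0}"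
    proof
      fix w assume "w \<in> (\<lambda>v. vadd v e) ` {v \<in> Vsup n T. \<not> v ! i0}"
      then obtain v where v: "v \<in> Vsup n T" "\<not> v ! i0" and w: "w = vadd v e" by blast
      have "v \<in> vecs n" using v Vv by blast
      hence "w ! i0" using w v ei0 ev i0 by (simp add: vecs_def)
      thus "w \<in> {v \<in> Vsup n T. \<not> \<not> v ! i0}" using clos[OF v(1)] w by simp
    qed
    show "inj_on (\<lambda>v. vadd v e) {v \<in> Vsup n T. \<not> v ! i0}"
      using ev Vv by (auto intro!: inj_onI intro: vadd_inj)
  qed
  have "card ((\<lambda>x. f x u) ` Vsup n T) \<le> card ((\<lambda>x. f x u) ` {v \<in> Vsup n T. \<not> v ! i0})"
    using sub fV by (intro card_mono) auto
  also have "\<dots> \<le> card {v \<in> Vsup n T. \<not> v ! i0}" by (rule card_image_le) (use fV in auto)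
  finally show ?thesis using half card_Vsup[OF T] by simp
qed


lemma part1:
  assumes m0: "0 \<le> m" and mn: "m \<le> real n"
    and lin: "linear_seeded n d r f" and cond: "strong_lossless_condenser n d r f m eps"
    and S: "S \<subseteq> {0..<n}" and cS: "real (card S) \<le> m"
  shows "real (card {u \<in> vecs d. \<not> kernel_tolerates n (kernel_code n r f u) S}) \<le> 4 * eps * 2 ^ d"
proof -
  define t0 where "t0 = nat \<lfloor>m\<rfloor>"
  have t0m: "real t0 \<le> m" using m0 by (simp add: t0_def)
  have mt0: "m < real t0 + 1" using m0 by (simp add: t0_def)
  have S': "S \<subseteq> {..<n}" using S by auto
  have fS: "finite S" using finite_subset[OF S] by simp
  have cSt: "card S \<le> t0" using cS m0 unfolding t0_def by (simp add: le_nat_floor)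
  have t0n: "t0 \<le> n" using t0m mn by linarith
  have "t0 - card S \<le> card ({..<n} - S)" using S' fS t0n by (simp add: card_Diff_subset)
  then obtain R where R: "R \<subseteq> {..<n} - S" "card R = t0 - card S" "finite R"
    by (rule obtain_subset_with_card_n)
  define T where "T = S \<union> R"
  have ST: "S \<subseteq> T" and T: "T \<subseteq> {..<n}" using R S' by (auto simp: T_def)
  have cT: "card T = t0"
    unfolding T_def using R fS cSt by (subst card_Un_disjoint) auto
  define V where "V = Vsup n T"
  have cV: "card V = 2 ^ t0" using card_Vsup[OF T] cT by (simp add: V_def)
  have Vv: "V \<subseteq> vecs n" by (auto simp: V_def Vsup_def)
  have fV: "finite V" using finite_subset[OF Vv] by simp
  have "zero_vec n \<in> V" by (simp add: V_def Vsup_def zero_vec_def vecs_def)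
  hence V0: "V \<noteq> {}" by blast
  define c where "c = (2::real) powr (- m)"
  define \<alpha> where "\<alpha> = 2 ^ t0 * c"
  have \<alpha>eq: "\<alpha> = 2 powr (real t0 - m)"
    by (simp add: \<alpha>_def c_def powr_realpow[symmetric] powr_add[symmetric])
  have \<alpha>1: "\<alpha> \<le> 1"
  proof -
    have "\<alpha> \<le> 2 powr 0" unfolding \<alpha>eq using t0m by (intro powr_mono) auto
    thus ?thesis by simp
  qed
  have \<alpha>h: "1 / 2 \<le> \<alpha>"
  proof -
    have "2 powr (-1) \<le> \<alpha>" unfolding \<alpha>eq using mt0 by (intro powr_mono) auto
    thus ?thesis by (simp add: powr_minus)
  qed
  have cpos: "0 < c" by (simp add: c_def)
  have c\<alpha>: "c = \<alpha> / 2 ^ t0" by (simp add: \<alpha>_def)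
  define W where "W = (if vecs n - V = {} then V else vecs n - V)"
  have Wv: "W \<subseteq> vecs n" using Vv by (auto simp: W_def)
  have fW: "finite W" using finite_subset[OF Wv] by simp
  have W0: "W \<noteq> {}" using V0 by (simp add: W_def)
  define X where "X = bind_pmf (bernoulli_pmf \<alpha>) (\<lambda>b. if b then pmf_of_set V else pmf_of_set W)"
  have pmfX: "pmf X x = indicator V x / real (card V) * \<alpha> + indicator W x / real (card W) * (1 - \<alpha>)" for x
    unfolding X_def pmf_bind using \<alpha>1 \<alpha>h fV V0 fW W0 by simp
  have setX: "set_pmf X \<subseteq> vecs n"
  proof
    fix x assume "x \<in> set_pmf X"
    then obtain b where "x \<in> set_pmf (if b then pmf_of_set V else pmf_of_set W)"
      unfolding X_def by auto
    thus "x \<in> vecs n" using Vv Wv fV V0 fW W0 by (cases b) auto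
  qed
  have pmf_le: "pmf X x \<le> c" for x
  proof (cases "vecs n - V = {}")
    case True
    hence "vecs n \<subseteq> V" by blast
    hence "card (vecs n) \<le> card V" using fV by (intro card_mono)
    hence "(2::nat) ^ n \<le> 2 ^ t0" using cV card_vecs by simp
    hence "n \<le> t0" by (simp add: power_increasing_iff)
    hence "t0 = n" using t0n by simp
    hence "real t0 = m" using t0m mn by linarith
    hence a1: "\<alpha> = 1" by (simp add: \<alpha>eq)
    have "pmf X x = indicator V x / 2 ^ t0" using pmfX[of x] a1 cV by simp
    also have "\<dots> \<le> 1 / 2 ^ t0" by (simp add: indicator_def)
    also have "\<dots> = c" using c\<alpha> a1 by simp
    finally show ?thesis .
  next
    case False
    hence Weq: "W = vecs n - V" by (simp add: W_def)
    have "card V < card (vecs n)" using False Vv by (intro psubset_card_mono) auto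
    hence "t0 < n" using cV card_vecs by simp
    hence "(2::nat) ^ (t0 + 1) \<le> 2 ^ n" by (intro power_increasing) auto
    moreover have "card W = 2 ^ n - 2 ^ t0" using Weq Vv cV card_vecs by (simp add: card_Diff_subset fV)
    ultimately have cW: "real (2 ^ t0) \<le> real (card W)" by simp
    show ?thesis
    proof (cases "x \<in> V")
      case True
      hence "x \<notin> W" using Weq by simp
      thus ?thesis using True pmfX[of x] cV c\<alpha> by simp
    next
      case xV: False
      show ?thesis
      proof (cases "x \<in> W")
        case True
        have "pmf X x = (1 - \<alpha>) / real (card W)" using True xV pmfX[of x] by simp
        also have "\<dots> \<le> (1 - \<alpha>) / 2 ^ t0"
        proof (intro divide_left_mono)
          show "2 ^ t0 \<le> real (card W)" using cW by simp
          show "0 \<le> 1 - \<alpha>" using \<alpha>1 by simp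
          have "0 < real (card W)" using fW W0 by (simp add: card_gt_0_iff)
          thus "0 < real (card W) * 2 ^ t0" by simp
        qed
        also have "\<dots> \<le> \<alpha> / 2 ^ t0" using \<alpha>h by (intro divide_right_mono) auto
        finally show ?thesis using c\<alpha> by simp
      next
        case False
        thus ?thesis using xV pmfX[of x] cpos by simp
      qed
    qed
  qed
  have src: "is_source n m X"
    unfolding is_source_def min_entropy_ge_def using setX pmf_le by (simp add: c_def)
  obtain Z where Zs: "set_pmf Z \<subseteq> vecs d \<times> vecs r" and Zm: "min_entropy_ge Z (real d + m)"
    and sd: "stat_dist (seeded_out f d X) Z \<le> eps"
    using cond src unfolding strong_lossless_condenser_def by blast
  have mXV: "\<alpha> \<le> measure X V"
  proof -
    have "measure X V = sum (pmf X) V" using fV by (simp add: measure_measure_pmf_finite)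
    also have "\<dots> \<ge> sum (\<lambda>_. \<alpha> / real (card V)) V"
    proof (intro sum_mono)
      fix x assume "x \<in> V"
      thus "\<alpha> / real (card V) \<le> pmf X x" using pmfX[of x] \<alpha>1
        by (simp add: indicator_def)
    qed
    finally show ?thesis using fV V0 by simp
  qed
  define Bad where "Bad = {u \<in> vecs d. \<not> kernel_tolerates n (kernel_code n r f u) S}"
  define Imf where "Imf = (\<lambda>u. (\<lambda>x. f x u) ` V)"
  have fBad: "finite Bad" "Bad \<subseteq> vecs d" by (auto simp: Bad_def)
  have ImV: "Imf u \<subseteq> vecs r" if "u \<in> vecs d" for u
    using lin that Vv by (auto simp: Imf_def linear_seeded_def)
  have Imc: "2 * card (Imf u) \<le> 2 ^ t0" if "u \<in> Bad" for u
    using part1_key[OF lin _ ST T, of u] that cT by (simp add: Bad_def Imf_def V_def)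
  define E where "E = Sigma Bad Imf"
  have ED: "E \<subseteq> vecs d \<times> vecs r" using ImV fBad by (auto simp: E_def)
  have fE: "finite E" by (rule finite_subset[OF ED]) simp
  have cE: "2 * card E \<le> card Bad * 2 ^ t0"
  proof -
    have "card E = (\<Sum>u\<in>Bad. card (Imf u))" unfolding E_def
      using fBad(1) fV by (intro card_SigmaI) (auto simp: Imf_def)
    hence "2 * card E = (\<Sum>u\<in>Bad. 2 * card (Imf u))" by (simp add: sum_distrib_left)
    also have "\<dots> \<le> (\<Sum>u\<in>Bad. 2 ^ t0)" by (intro sum_mono Imc)
    finally show ?thesis by simp
  qed
  have P: "\<alpha> * (real (card Bad) / 2 ^ d) \<le> measure (seeded_out f d X) E"
  proof -
    have "measure X V * (real (card Bad) / 2 ^ d) \<le> measure (seeded_out f d X) E"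
      unfolding E_def using fV fBad by (intro seeded_out_lower) (auto simp: Imf_def)
    moreover have "\<alpha> * (real (card Bad) / 2 ^ d) \<le> measure X V * (real (card Bad) / 2 ^ d)"
      using mXV by (intro mult_right_mono) auto
    ultimately show ?thesis by linarith
  qed
  have Q: "measure Z E \<le> real (card E) * (c / 2 ^ d)"
  proof (rule measure_le_card[OF fE])
    fix x
    have "pmf Z x \<le> 2 powr (- (real d + m))" using Zm unfolding min_entropy_ge_def by blast
    also have "2 powr (- (real d + m)) = c / 2 ^ d"
    proof -
      have e: "- (real d + m) = (- m) + (- real d)" by simp
      have "2 powr (- (real d + m)) = 2 powr (- m) * 2 powr (- real d)"
        unfolding e by (rule powr_add)
      moreover have "(2::real) powr (- real d) = 1 / 2 ^ d"
        by (simp add: powr_minus powr_realpow divide_inverse)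
      ultimately show ?thesis by (simp add: c_def)
    qed
    finally show "pmf Z x \<le> c / 2 ^ d" .
  qed
  have s1: "set_pmf (seeded_out f d X) \<subseteq> vecs d \<times> vecs r"
    using set_seeded_out[OF lin setX] .
  have "measure (seeded_out f d X) E - measure Z E \<le> eps"
    using stat_dist_lower[OF _ s1 Zs ED] sd by simp
  hence main: "\<alpha> * (real (card Bad) / 2 ^ d) - real (card E) * (c / 2 ^ d) \<le> eps"
    using P Q by linarith
  have "real (card E) * (c / 2 ^ d) \<le> \<alpha> * (real (card Bad) / 2 ^ d) / 2"
  proof -
    have "real (2 * card E) \<le> real (card Bad * 2 ^ t0)" using cE by (simp only: of_nat_le_iff)
    hence h: "2 * real (card E) \<le> real (card Bad) * 2 ^ t0" by simp
    have "real (card E) * (c / 2 ^ d) = (2 * real (card E)) * (c / 2 ^ d) / 2" by simp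
    also have "\<dots> \<le> (real (card Bad) * 2 ^ t0) * (c / 2 ^ d) / 2"
      using cpos by (intro divide_right_mono mult_right_mono h) auto
    also have "\<dots> = \<alpha> * (real (card Bad) / 2 ^ d) / 2" by (simp add: \<alpha>_def)
    finally show ?thesis .
  qed
  hence "\<alpha> * (real (card Bad) / 2 ^ d) / 2 \<le> eps" using main by linarith
  moreover have "(1/2) * (real (card Bad) / 2 ^ d) / 2 \<le> \<alpha> * (real (card Bad) / 2 ^ d) / 2"
    using \<alpha>h by (intro divide_right_mono mult_right_mono) auto
  ultimately have "real (card Bad) / 2 ^ d / 4 \<le> eps" by simp
  hence "real (card Bad) \<le> eps * 4 * 2 ^ d" by (simp add: field_simps)
  thus ?thesis unfolding Bad_def[symmetric] by (simp add: algebra_simps)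
qed

theorem mainTheorem16:
  fixes n d r d' k :: nat and m eps eps' :: real
    and f g :: "bool list \<Rightarrow> bool list \<Rightarrow> bool list" and S :: "nat set"
  assumes "0 \<le> m" and "m \<le> real n"
    and "linear_seeded n d r f" and "strong_lossless_condenser n d r f m eps"
    and "linear_seeded n d' k g" and "strong_extractor n d' k g (real n - m) eps'"
    and "S \<subseteq> {0..<n}" and "real (card S) \<le> m"
  shows "real (card {u \<in> vecs d. \<not> kernel_tolerates n (kernel_code n r f u) S}) \<le> 5 * eps * 2 ^ d
       \<and> real (card {u \<in> vecs d'. \<not> gen_tolerates n k g u S}) \<le> 5 * eps' * 2 ^ d'"
proof
  have a: "real (card {u \<in> vecs d. \<not> kernel_tolerates n (kernel_code n r f u) S}) \<le> 4 * eps * 2 ^ d"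
    using part1[OF assms(1-4,7,8)] .
  have "0 \<le> 4 * eps * 2 ^ d" by (rule order_trans[OF of_nat_0_le_iff a])
  hence p: "0 \<le> eps * 2 ^ d" by simp
  have "4 * eps * 2 ^ d = 4 * (eps * 2 ^ d)" "5 * eps * 2 ^ d = 5 * (eps * 2 ^ d)" by simp_all
  thus "real (card {u \<in> vecs d. \<not> kernel_tolerates n (kernel_code n r f u) S}) \<le> 5 * eps * 2 ^ d"
    using a p by linarith
  have b: "real (card {u \<in> vecs d'. \<not> gen_tolerates n k g u S}) \<le> 2 * eps' * 2 ^ d'"
    using part2[OF assms(5,6,7,8)] .
  have "0 \<le> 2 * eps' * 2 ^ d'" by (rule order_trans[OF of_nat_0_le_iff b])
  hence q: "0 \<le> eps' * 2 ^ d'" by simp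
  have "2 * eps' * 2 ^ d' = 2 * (eps' * 2 ^ d')" "5 * eps' * 2 ^ d' = 5 * (eps' * 2 ^ d')" by simp_all
  thus "real (card {u \<in> vecs d'. \<not> gen_tolerates n k g u S}) \<le> 5 * eps' * 2 ^ d'"
    using b q by linarith
qed

end
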